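(* CAP has exactly one solution, and for any auxiliary function $g:I\to\mathbb{R}$ and any $h\in I$ solving WFP (i.e. $\beta(h)=b$), this unique solution is $(\theta_1(h),\dots,\theta_k(h))$; moreover such an $h$ exists.
   Context: Let $s:[0,B]\to[0,\infty)$ satisfy $s(0)=0$, be strictly increasing, strictly concave, differentiable, with $s'$ continuous on $[0,B]$ (so $s'>0$ is strictly decreasing). Fix $b\in(0,B]$, an integer $k\ge2$, and constants $c_1\ge c_2\ge\cdots\ge c_k>0$. The Constrained Allocation Problem (CAP) is: find $\theta_1,\dots,\theta_k\ge0$ such that (i) $\theta_1+\cdots+\theta_k=b$; (ii) $\theta_1\le\theta_2\le\cdots\le\theta_k$; (iii) $s'(\theta_j)/s'(\theta_i)=c_j/c_i$ whenever $i<j$ and $\theta_j\ge\theta_i>0$; (iv) $s'(\theta_j)/s'(0)\ge c_j/c_i$ whenever $i<j$ and $\theta_j>\theta_i=0$. Let $s'^{(-1)}:[s'(b),s'(0)]\to[0,b]$ denote the inverse of $s'$ restricted to $[0,b]$. An auxiliary function is a continuous, strictly decreasing function $g:I\to\mathbb{R}$ on an interval $I\subseteq\mathbb{R}$ for which there exist $h_{lo}<h_{hi}$ in $I$ with $g(h_{hi})\le s'(b)/c_1$ and $g(h_{lo})\ge s'(0)/c_k$. For $i=1,\dots,k$ and $h\in I$ define $\theta_i(h)=0$ if $c_ig(h)\ge s'(0)$; $\theta_i(h)=s'^{(-1)}(c_ig(h))$ if $s'(b)<c_ig(h)<s'(0)$; and $\theta_i(h)=b$ if $c_ig(h)\le s'(b)$.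 Let $\beta(h)=\sum_{i=1}^k\theta_i(h)$. The Water-Filling Problem (WFP) is: find $h\in I$ with $\beta(h)=b$. *)

theory Defs
  imports "HOL-Analysis.Analysis"
begin

definition strictly_concave_on :: "real set \<Rightarrow> (real \<Rightarrow> real) \<Rightarrow> bool" where
  "strictly_concave_on S f \<longleftrightarrow>
     (\<forall>x\<in>S. \<forall>y\<in>S. \<forall>t::real. x \<noteq> y \<and> 0 < t \<and> t < 1 \<longrightarrow>
        f ((1 - t) * x + t * y) > (1 - t) * f x + t * f y)"

text \<open>Constrained Allocation Problem: \<open>th i\<close> for \<open>i \<in> {1..k}\<close> is a solution.
  \<open>ds\<close> is the derivative s'.\<close>
definition cap_solution ::
  "(real \<Rightarrow> real) \<Rightarrow> real \<Rightarrow> nat \<Rightarrow> (nat \<Rightarrow> real) \<Rightarrow> (nat \<Rightarrow> real) \<Rightarrow> bool" where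
  "cap_solution ds b k c th \<longleftrightarrow>
     (\<forall>i\<in>{1..k}. th i \<ge> 0) \<and>
     (\<Sum>i=1..k. th i) = b \<and>
     (\<forall>i\<in>{1..k}. \<forall>j\<in>{1..k}. i \<le> j \<longrightarrow> th i \<le> th j) \<and>
     (\<forall>i\<in>{1..k}. \<forall>j\<in>{1..k}. i < j \<and> th j \<ge> th i \<and> th i > 0 \<longrightarrow>
        ds (th j) / ds (th i) = c j / c i) \<and>
     (\<forall>i\<in>{1..k}. \<forall>j\<in>{1..k}. i < j \<and> th j > th i \<and> th i = 0 \<longrightarrow>
        ds (th j) / ds 0 \<ge> c j / c i)"

definition auxiliary_function ::
  "(real \<Rightarrow> real) \<Rightarrow> real \<Rightarrow> nat \<Rightarrow> (nat \<Rightarrow> real) \<Rightarrow> real set \<Rightarrow> (real \<Rightarrow> real) \<Rightarrow> bool" where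
  "auxiliary_function ds b k c I g \<longleftrightarrow>
     is_interval I \<and> continuous_on I g \<and>
     (\<forall>x\<in>I. \<forall>y\<in>I. x < y \<longrightarrow> g y < g x) \<and>
     (\<exists>hlo\<in>I. \<exists>hhi\<in>I. hlo < hhi \<and> g hhi \<le> ds b / c 1 \<and> g hlo \<ge> ds 0 / c k)"

definition wf_theta ::
  "(real \<Rightarrow> real) \<Rightarrow> real \<Rightarrow> (nat \<Rightarrow> real) \<Rightarrow> (real \<Rightarrow> real) \<Rightarrow> nat \<Rightarrow> real \<Rightarrow> real" where
  "wf_theta ds b c g i h =
     (if c i * g h \<ge> ds 0 then 0
      else if c i * g h \<le> ds b then b
      else the_inv_into {0..b} ds (c i * g h))"

definition wf_beta ::
  "(real \<Rightarrow> real) \<Rightarrow> real \<Rightarrow> nat \<Rightarrow> (nat \<Rightarrow> real) \<Rightarrow> (real \<Rightarrow> real) \<Rightarrow> real \<Rightarrow> real" where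
  "wf_beta ds b k c g h = (\<Sum>i=1..k. wf_theta ds b c g i h)"

end

theory Submission
  imports Defs
begin


lemma tangent_strict:
  fixes s ds :: "real \<Rightarrow> real" and B :: real
  assumes s_conc: "strictly_concave_on {0..B} s"
    and s_deriv: "\<forall>x\<in>{0..B}. (s has_real_derivative ds x) (at x within {0..B})"
    and c: "0 < c" "c < B" and x: "x \<in> {0..B}" "x \<noteq> c"
  shows "s x < s c + ds c * (x - c)"
proof -
  have conv: "convex_on {0..B} (\<lambda>x. - s x)"
  proof (rule convex_onI)
    fix t x y :: real assume t: "0 < t" "t < 1" and xy: "x \<in> {0..B}" "y \<in> {0..B}"
    show "- s ((1 - t) *\<^sub>R x + t *\<^sub>R y) \<le> (1 - t) * - s x + t * - s y"
    proof (cases "x = y")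
      case True then show ?thesis by (simp add: algebra_simps)
    next
      case False
      then have "s ((1 - t) * x + t * y) > (1 - t) * s x + t * s y"
        using s_conc xy t unfolding strictly_concave_on_def by blast
      then show ?thesis by simp
    qed
  qed simp
  have cd: "((\<lambda>x. - s x) has_real_derivative - ds c) (at c within {0..B})"
    using s_deriv c by (intro DERIV_minus) auto
  define m where "m = (x + c) / 2"
  have mB: "m \<in> {0..B}" using x c by (auto simp: m_def)
  have w: "(- s m) - (- s c) \<ge> (- ds c) * (m - c)"
    by (rule convex_on_imp_above_tangent[OF conv _ _ mB cd]) (use c in auto)
  have "s ((1 - 1/2) * c + (1/2) * x) > (1 - 1/2) * s c + (1/2) * s x"
    using s_conc[unfolded strictly_concave_on_def, rule_format, of c x "1/2"] x c by auto
  moreover have "(1 - 1/2) * c + (1/2) * x = m" by (simp add: m_def)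
  ultimately have sm: "s m > (s c + s x) / 2" by simp
  have e: "ds c * (m - c) = ds c * (x - c) / 2" by (simp add: m_def algebra_simps)
  have e2: "(- ds c) * (m - c) = - (ds c * (m - c))" by simp
  show ?thesis using w sm e e2 by argo
qed

lemma ds_dec_interior:
  fixes s ds :: "real \<Rightarrow> real" and B :: real
  assumes s_conc: "strictly_concave_on {0..B} s"
    and s_deriv: "\<forall>x\<in>{0..B}. (s has_real_derivative ds x) (at x within {0..B})"
    and xy: "0 < x" "x < y" "y < B"
  shows "ds y < ds x"
proof -
  have 1: "s y < s x + ds x * (y - x)"
    using tangent_strict[OF s_conc s_deriv, of x y] xy by auto
  have 2: "s x < s y + ds y * (x - y)"
    using tangent_strict[OF s_conc s_deriv, of y x] xy by auto
  from 1 2 have "0 < (ds x - ds y) * (y - x)" by (simp add: algebra_simps)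
  with xy show ?thesis by (simp add: zero_less_mult_iff)
qed

lemma ds_dec:
  fixes s ds :: "real \<Rightarrow> real" and B :: real
  assumes s_conc: "strictly_concave_on {0..B} s"
    and s_deriv: "\<forall>x\<in>{0..B}. (s has_real_derivative ds x) (at x within {0..B})"
    and ds_cont: "continuous_on {0..B} ds"
    and xy: "0 \<le> x" "x < y" "y \<le> B"
  shows "ds y < ds x"
proof -
  note int = ds_dec_interior[OF s_conc s_deriv]
  have weakL: "ds p \<le> ds x'" if "0 \<le> x'" "x' < p" "p < B" for x' p
  proof (rule ccontr)
    assume "\<not> ds p \<le> ds x'"
    then have lt: "ds x' < ds p" by simp
    have cc: "continuous_on {x'..p} ds" using ds_cont by (rule continuous_on_subset) (use that in auto)
    have "\<exists>z. x' \<le> z \<and> z \<le> p \<and> ds z = (ds x' + ds p) / 2"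
      by (rule IVT'[OF _ _ _ cc]) (use lt that in auto)
    then obtain z where z: "x' \<le> z" "z \<le> p" "ds z = (ds x' + ds p) / 2" by blast
    have "z \<noteq> x'" "z \<noteq> p" using z lt by auto
    then have "ds p < ds z" using int[of z p] z that by auto
    then show False using z lt by simp
  qed
  have weakR: "ds y' \<le> ds p" if "0 < p" "p < y'" "y' \<le> B" for y' p
  proof (rule ccontr)
    assume "\<not> ds y' \<le> ds p"
    then have lt: "ds p < ds y'" by simp
    have cc: "continuous_on {p..y'} ds" using ds_cont by (rule continuous_on_subset) (use that in auto)
    have "\<exists>z. p \<le> z \<and> z \<le> y' \<and> ds z = (ds y' + ds p) / 2"
      by (rule IVT'[OF _ _ _ cc]) (use lt that in auto)
    then obtain z where z: "p \<le> z" "z \<le> y'" "ds z = (ds y' + ds p) / 2" by blast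
    have "z \<noteq> y'" "z \<noteq> p" using z lt by auto
    then have "ds z < ds p" using int[of p z] z that by auto
    then show False using z lt by simp
  qed
  define p where "p = x + (y - x) / 3"
  define q where "q = x + 2 * (y - x) / 3"
  have pq: "x < p" "p < q" "q < y" using xy by (simp_all add: p_def q_def field_simps)
  have "ds p \<le> ds x" using weakL[of x p] xy pq by simp
  moreover have "ds q < ds p" using int[of p q] xy pq by simp
  moreover have "ds y \<le> ds q" using weakR[of q y] xy pq by simp
  ultimately show ?thesis by simp
qed



locale wfl =
  fixes ds :: "real \<Rightarrow> real" and b :: real and k :: nat and c :: "nat \<Rightarrow> real"
  assumes dec: "\<And>x y. 0 \<le> x \<Longrightarrow> x < y \<Longrightarrow> y \<le> b \<Longrightarrow> ds y < ds x"
    and cont: "continuous_on {0..b} ds"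
    and pos: "\<And>x. 0 \<le> x \<Longrightarrow> x \<le> b \<Longrightarrow> ds x > 0"
    and bpos: "0 < b"
    and k2: "2 \<le> k"
    and cmono: "\<And>i j. 1 \<le> i \<Longrightarrow> i \<le> j \<Longrightarrow> j \<le> k \<Longrightarrow> c j \<le> c i"
    and cpos: "\<And>i. 1 \<le> i \<Longrightarrow> i \<le> k \<Longrightarrow> c i > 0"
begin

definition G where "G = the_inv_into {0..b} ds"
definition clamp where "clamp y = max (ds b) (min (ds 0) y)"
definition F where "F y = G (clamp y)"

lemma dsb0: "ds b < ds 0" using dec[of 0 b] bpos by simp

lemma inj: "inj_on ds {0..b}"
  by (rule inj_onI) (metis atLeastAtMost_iff dec linorder_neqE_linordered_idom order_less_irrefl)

lemma img: "ds ` {0..b} = {ds b..ds 0}"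
proof
  show "ds ` {0..b} \<subseteq> {ds b..ds 0}"
  proof
    fix y assume "y \<in> ds ` {0..b}"
    then obtain x where x: "x \<in> {0..b}" "y = ds x" by auto
    then show "y \<in> {ds b..ds 0}"
      using dec[of 0 x] dec[of x b] by (cases "x = 0"; cases "x = b") auto
  qed
next
  show "{ds b..ds 0} \<subseteq> ds ` {0..b}"
  proof
    fix y assume y: "y \<in> {ds b..ds 0}"
    have "\<exists>x. 0 \<le> x \<and> x \<le> b \<and> ds x = y"
      by (rule IVT2'[OF _ _ _ cont]) (use y bpos in auto)
    then show "y \<in> ds ` {0..b}" by force
  qed
qed

lemma clamp_in: "clamp y \<in> {ds b..ds 0}"
  using dsb0 by (auto simp: clamp_def)

lemma G_in: "z \<in> {ds b..ds 0} \<Longrightarrow> G z \<in> {0..b}"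
  unfolding G_def by (rule the_inv_into_into[OF inj]) (auto simp: img)

lemma ds_G: "z \<in> {ds b..ds 0} \<Longrightarrow> ds (G z) = z"
  unfolding G_def by (rule f_the_inv_into_f[OF inj]) (auto simp: img)

lemma G_ds: "x \<in> {0..b} \<Longrightarrow> G (ds x) = x"
  unfolding G_def by (rule the_inv_into_f_f[OF inj])

lemma F_in: "F y \<in> {0..b}"
  unfolding F_def using G_in clamp_in by blast

lemma ds_F: "ds (F y) = clamp y"
  unfolding F_def using ds_G clamp_in by blast

lemma F_zero: "ds 0 \<le> y \<Longrightarrow> F y = 0"
  unfolding F_def clamp_def using G_ds[of 0] dsb0 bpos by simp

lemma F_b: "y \<le> ds b \<Longrightarrow> F y = b"
  unfolding F_def clamp_def using G_ds[of b] dsb0 bpos by simp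

lemma F_zeroD: "F y = 0 \<Longrightarrow> ds 0 \<le> y"
  using ds_F[of y] dsb0 by (auto simp: clamp_def split: if_splits)

lemma F_anti: "y1 \<le> y2 \<Longrightarrow> F y2 \<le> F y1"
proof (rule ccontr)
  assume y: "y1 \<le> y2" and "\<not> F y2 \<le> F y1"
  then have "F y1 < F y2" by simp
  then have "ds (F y2) < ds (F y1)" using dec F_in by auto
  then have "clamp y2 < clamp y1" by (simp add: ds_F)
  then show False using y by (auto simp: clamp_def)
qed

lemma G_cont: "continuous_on {ds b..ds 0} G"
  using continuous_on_inv[OF cont compact_Icc, of G] G_ds img by auto

lemma F_cont: "continuous_on UNIV F"
proof -
  have "continuous_on UNIV clamp" unfolding clamp_def by (intro continuous_intros)
  then show ?thesis unfolding F_def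
    by (rule continuous_on_compose2[OF G_cont]) (use clamp_in in auto)
qed

lemma theta_eq: "wf_theta ds b c g i h = F (c i * g h)"
  unfolding wf_theta_def using F_zero F_b unfolding F_def clamp_def G_def by auto


lemma F_ds: "x \<in> {0..b} \<Longrightarrow> F (ds x) = x"
proof -
  assume x: "x \<in> {0..b}"
  then have "ds x \<in> {ds b..ds 0}" using img by blast
  then have "clamp (ds x) = ds x" by (auto simp: clamp_def)
  then show ?thesis using G_ds x by (simp add: F_def)
qed

lemma clamp_id: "z \<in> {ds b..ds 0} \<Longrightarrow> clamp z = z"
  by (auto simp: clamp_def)

abbreviation S where "S l \<equiv> (\<Sum>i=1..k. F (c i * l))"

lemma pair_sum:
  assumes "\<forall>i\<in>{1..k}. th i \<ge> (0::real)" "i \<in> {1..k}" "j \<in> {1..k}" "i \<noteq> j"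
  shows "th i + th j \<le> (\<Sum>i=1..k. th i)"
proof -
  have "(\<Sum>l\<in>{i,j}. th l) \<le> (\<Sum>l=1..k. th l)"
    by (rule sum_mono2) (use assms in auto)
  then show ?thesis using assms(4) by simp
qed

lemma S_pos: "S l = b \<Longrightarrow> l > 0"
proof (rule ccontr)
  assume Sb: "S l = b" and "\<not> l > 0"
  then have l: "l \<le> 0" by simp
  have "\<forall>i\<in>{1..k}. F (c i * l) = b"
  proof
    fix i assume i: "i \<in> {1..k}"
    have "c i * l \<le> 0" using cpos[of i] i l by (simp add: mult_nonneg_nonpos)
    also have "0 < ds b" using pos[of b] bpos by simp
    finally show "F (c i * l) = b" by (intro F_b) simp
  qed
  then have "S l = real k * b" by simp
  moreover have "real k * b \<ge> 2 * b" using k2 bpos by (intro mult_right_mono) auto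
  ultimately show False using Sb bpos by simp
qed

lemma uniq:
  assumes "S l = b" "S m = b" "l \<le> m"
  shows "\<forall>i\<in>{1..k}. F (c i * l) = F (c i * m)"
proof -
  have le: "\<forall>i\<in>{1..k}. F (c i * m) \<le> F (c i * l)"
  proof
    fix i assume i: "i \<in> {1..k}"
    have "c i * l \<le> c i * m" using assms(3) cpos[of i] i by (intro mult_left_mono) auto
    then show "F (c i * m) \<le> F (c i * l)" by (rule F_anti)
  qed
  have "(\<Sum>i=1..k. F (c i * l) - F (c i * m)) = 0"
    using assms by (simp add: sum_subtractf)
  then have "\<forall>i\<in>{1..k}. F (c i * l) - F (c i * m) = 0"
    using le by (subst (asm) sum_nonneg_eq_0_iff) auto
  then show ?thesis by simp
qed

lemma uniq2:
  assumes "S l = b" "S m = b"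
  shows "\<forall>i\<in>{1..k}. F (c i * l) = F (c i * m)"
proof (cases "l \<le> m")
  case True
  show ?thesis by (rule uniq[OF assms True])
next
  case False
  then have "m \<le> l" by simp
  from uniq[OF assms(2,1) this] show ?thesis by metis
qed

lemma cap_form:
  assumes cap: "cap_solution ds b k c th"
  shows "\<exists>l. S l = b \<and> (\<forall>i\<in>{1..k}. th i = F (c i * l))"
proof -
  note C = cap[unfolded cap_solution_def]
  have nn: "\<forall>i\<in>{1..k}. th i \<ge> 0" and sb: "(\<Sum>i=1..k. th i) = b"
    and mo: "\<forall>i\<in>{1..k}. \<forall>j\<in>{1..k}. i \<le> j \<longrightarrow> th i \<le> th j"
    and c3: "\<forall>i\<in>{1..k}. \<forall>j\<in>{1..k}. i < j \<and> th j \<ge> th i \<and> th i > 0 \<longrightarrow>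
        ds (th j) / ds (th i) = c j / c i"
    and c4: "\<forall>i\<in>{1..k}. \<forall>j\<in>{1..k}. i < j \<and> th j > th i \<and> th i = 0 \<longrightarrow>
        ds (th j) / ds 0 \<ge> c j / c i"
    using C by blast+
  have kin: "k \<in> {1..k}" using k2 by simp
  have leb: "th i \<le> b" if "i \<in> {1..k}" for i
    using member_le_sum[of i "{1..k}" th] nn that sb by auto
  have thk: "th k > 0"
  proof (rule ccontr)
    assume "\<not> th k > 0"
    then have "\<forall>i\<in>{1..k}. th i = 0" using mo nn kin by (metis atLeastAtMost_iff order_antisym not_less)
    then have "(\<Sum>i=1..k. th i) = 0" by simp
    then show False using sb bpos by simp
  qed
  define l where "l = ds (th k) / c k"
  have ck: "c k > 0" using cpos[of k] k2 by simp
  have dsk: "ds (th k) > 0" using pos[of "th k"] leb[OF kin] thk by simp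
  have eq: "th i = F (c i * l)" if i: "i \<in> {1..k}" for i
  proof (cases "th i > 0")
    case True
    have ci: "c i > 0" using cpos i by simp
    have dsi: "ds (th i) > 0" using pos[of "th i"] leb[OF i] nn i by simp
    have "ds (th i) = c i * l"
    proof (cases "i = k")
      case True then show ?thesis using ck by (simp add: l_def)
    next
      case False
      then have "i < k" using i by simp
      then have "ds (th k) / ds (th i) = c k / c i" using c3 i kin mo True by auto
      then show ?thesis using ci ck dsi by (simp add: l_def field_simps)
    qed
    then have "F (c i * l) = F (ds (th i))" by simp
    also have "\<dots> = th i" using F_ds leb[OF i] nn i by simp
    finally show ?thesis by simp
  next
    case False
    moreover have "th i \<ge> 0" using nn i by blast
    ultimately have z: "th i = 0" by simp
    then have "i \<noteq> k" using thk by auto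
    then have "i < k" using i by simp
    then have "ds (th k) / ds 0 \<ge> c k / c i" using c4 i kin z thk by auto
    moreover have "c i > 0" using cpos i by simp
    moreover have "ds 0 > 0" using pos[of 0] bpos by simp
    ultimately have "ds 0 \<le> c i * l" using ck by (simp add: l_def field_simps)
    then show ?thesis using F_zero z by simp
  qed
  have "S l = b" using sb eq by simp
  with eq show ?thesis by blast
qed

lemma cap_of:
  assumes Sb: "S l = b"
  shows "cap_solution ds b k c (\<lambda>i. F (c i * l))"
proof -
  have lp: "l > 0" using S_pos[OF Sb] .
  define th where "th i = F (c i * l)" for i
  have nn: "\<forall>i\<in>{1..k}. th i \<ge> 0" using F_in by (simp add: th_def)
  have sb: "(\<Sum>i=1..k. th i) = b" using Sb by (simp add: th_def)
  have mo: "th i \<le> th j" if "i \<in> {1..k}" "j \<in> {1..k}" "i \<le> j" for i j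
    unfolding th_def using cmono[of i j] that lp by (auto intro!: F_anti mult_right_mono)
  have ds0: "ds 0 > 0" using pos[of 0] bpos by simp
  have c3: "ds (th j) / ds (th i) = c j / c i"
    if ij: "i \<in> {1..k}" "j \<in> {1..k}" "i < j" "th i > 0" for i j
  proof -
    have yji: "c j * l \<le> c i * l" using cmono[of i j] ij lp by (auto intro: mult_right_mono)
    have a: "c i * l < ds 0"
    proof (rule ccontr)
      assume "\<not> c i * l < ds 0" then have "th i = 0" using F_zero by (simp add: th_def)
      then show False using ij by simp
    qed
    have tb: "th i + th j \<le> b" using pair_sum[OF nn ij(1,2)] ij sb by simp
    have bi: "ds b < c i * l"
    proof (rule ccontr)
      assume "\<not> ds b < c i * l" then have "th i = b" using F_b by (simp add: th_def)
      moreover have "th i \<le> th j" using mo ij by simp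
      ultimately show False using tb bpos by simp
    qed
    have bj: "ds b < c j * l"
    proof (rule ccontr)
      assume "\<not> ds b < c j * l" then have "th j = b" using F_b by (simp add: th_def)
      then show False using tb ij by simp
    qed
    have "ds (th i) = c i * l" unfolding th_def ds_F using a bi by (intro clamp_id) auto
    moreover have "ds (th j) = c j * l" unfolding th_def ds_F using a bj yji by (intro clamp_id) auto
    ultimately show ?thesis using lp by simp
  qed
  have c4: "ds (th j) / ds 0 \<ge> c j / c i"
    if ij: "i \<in> {1..k}" "j \<in> {1..k}" "i < j" "th j > th i" "th i = 0" for i j
  proof -
    have ci: "c i > 0" "c j > 0" using cpos ij by auto
    have a: "ds 0 \<le> c i * l" using F_zeroD ij by (simp add: th_def)
    have bj: "c j * l < ds 0"
    proof (rule ccontr)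
      assume "\<not> c j * l < ds 0" then have "th j = 0" using F_zero by (simp add: th_def)
      then show False using ij by simp
    qed
    have dj: "ds (th j) \<ge> c j * l" unfolding th_def ds_F clamp_def using bj by simp
    have "c j / c i = (c j * ds 0) / (c i * ds 0)" using ds0 by simp
    also have "\<dots> \<le> (c j * (c i * l)) / (c i * ds 0)"
      using a ci ds0 by (intro divide_right_mono mult_left_mono) auto
    also have "\<dots> = c j * l / ds 0" using ci ds0 by (simp add: field_simps)
    also have "\<dots> \<le> ds (th j) / ds 0" using dj ds0 by (intro divide_right_mono) auto
    finally show ?thesis .
  qed
  show ?thesis unfolding cap_solution_def th_def[symmetric]
    using nn sb mo c3 c4 by blast
qed

lemma exists_h:
  fixes I :: "real set" and g :: "real \<Rightarrow> real"
  assumes I: "is_interval I" and gc: "continuous_on I g"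
    and h: "hlo \<in> I" "hhi \<in> I" "hlo < hhi" "g hhi \<le> ds b / c 1" "g hlo \<ge> ds 0 / c k"
  shows "\<exists>h\<in>I. S (g h) = b"
proof -
  have sub: "{hlo..hhi} \<subseteq> I"
  proof
    fix x assume "x \<in> {hlo..hhi}"
    then show "x \<in> I" using I[unfolded is_interval_1, rule_format, OF h(1) h(2), of x] by simp
  qed
  have c1: "c 1 > 0" and ck: "c k > 0" using cpos k2 by auto
  have lo: "S (g hlo) = 0"
  proof -
    have "\<forall>i\<in>{1..k}. F (c i * g hlo) = 0"
    proof
      fix i assume i: "i \<in> {1..k}"
      have "ds 0 \<le> c k * g hlo" using h ck by (simp add: field_simps)
      also have "\<dots> \<le> c i * g hlo"
      proof -
        have "ds 0 / c k > 0" using pos[of 0] bpos ck by simp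
        then have "g hlo \<ge> 0" using h by linarith
        then show ?thesis using cmono[of i k] i by (auto intro: mult_right_mono)
      qed
      finally show "F (c i * g hlo) = 0" by (rule F_zero)
    qed
    then show ?thesis by simp
  qed
  have hi: "S (g hhi) = real k * b"
  proof -
    have "\<forall>i\<in>{1..k}. F (c i * g hhi) = b"
    proof
      fix i assume i: "i \<in> {1..k}"
      have "c i * g hhi \<le> ds b"
      proof (cases "g hhi \<ge> 0")
        case True
        then have "c i * g hhi \<le> c 1 * g hhi" using cmono[of 1 i] i by (auto intro: mult_right_mono)
        also have "\<dots> \<le> ds b" using h c1 by (simp add: field_simps)
        finally show ?thesis .
      next
        case False
        then have "c i * g hhi \<le> 0" using cpos[of i] i by (simp add: mult_nonneg_nonpos)
        also have "0 \<le> ds b" using pos[of b] bpos by simp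
        finally show ?thesis .
      qed
      then show "F (c i * g hhi) = b" by (rule F_b)
    qed
    then show ?thesis by simp
  qed
  have "1 * b \<le> real k * b" using k2 bpos by (intro mult_right_mono) auto
  then have "real k * b \<ge> b" by simp
  have gc': "continuous_on {hlo..hhi} g" by (rule continuous_on_subset[OF gc sub])
  have each: "continuous_on {hlo..hhi} (\<lambda>h. F (c i * g h))" for i
  proof -
    have "continuous_on {hlo..hhi} (\<lambda>h. c i * g h)" using gc' by (intro continuous_intros)
    then show ?thesis by (rule continuous_on_compose2[OF F_cont]) auto
  qed
  have cS: "continuous_on {hlo..hhi} (\<lambda>h. S (g h))"
    by (rule continuous_on_sum) (use each in blast)
  have "\<exists>h. hlo \<le> h \<and> h \<le> hhi \<and> S (g h) = b"
    by (rule IVT'[OF _ _ _ cS]) (use lo hi h bpos \<open>real k * b \<ge> b\<close> in auto)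
  then show ?thesis using sub by auto
qed

end

theorem theorem3:
  fixes s ds :: "real \<Rightarrow> real" and B b :: real and k :: nat and c :: "nat \<Rightarrow> real"
  assumes s0: "s 0 = 0"
    and s_mono: "\<forall>x\<in>{0..B}. \<forall>y\<in>{0..B}. x < y \<longrightarrow> s x < s y"
    and s_conc: "strictly_concave_on {0..B} s"
    and s_deriv: "\<forall>x\<in>{0..B}. (s has_real_derivative ds x) (at x within {0..B})"
    and ds_cont: "continuous_on {0..B} ds"
    and ds_pos: "\<forall>x\<in>{0..B}. ds x > 0"
    and b: "0 < b" "b \<le> B"
    and k: "k \<ge> 2"
    and c_mono: "\<forall>i\<in>{1..k}. \<forall>j\<in>{1..k}. i \<le> j \<longrightarrow> c j \<le> c i"
    and c_pos: "\<forall>i\<in>{1..k}. c i > 0"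
  shows "(\<exists>th. cap_solution ds b k c th \<and>
            (\<forall>th'. cap_solution ds b k c th' \<longrightarrow> (\<forall>i\<in>{1..k}. th' i = th i))) \<and>
         (\<forall>I g. auxiliary_function ds b k c I g \<longrightarrow>
            (\<forall>h\<in>I. wf_beta ds b k c g h = b \<longrightarrow>
               (\<forall>th. cap_solution ds b k c th \<longrightarrow> (\<forall>i\<in>{1..k}. th i = wf_theta ds b c g i h))) \<and>
            (\<exists>h\<in>I. wf_beta ds b k c g h = b))"
proof -
  have Bpos: "0 < B" using b by simp
  have decB: "\<And>x y. 0 \<le> x \<Longrightarrow> x < y \<Longrightarrow> y \<le> b \<Longrightarrow> ds y < ds x"
    using ds_dec[OF s_conc s_deriv ds_cont] b by auto
  have contb: "continuous_on {0..b} ds" using ds_cont by (rule continuous_on_subset) (use b in auto)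
  interpret W: wfl ds b k c
  proof
    show "\<And>x y. 0 \<le> x \<Longrightarrow> x < y \<Longrightarrow> y \<le> b \<Longrightarrow> ds y < ds x" by (rule decB)
    show "continuous_on {0..b} ds" by (rule contb)
    show "\<And>x. 0 \<le> x \<Longrightarrow> x \<le> b \<Longrightarrow> ds x > 0" using ds_pos b by auto
    show "0 < b" using b by simp
    show "2 \<le> k" by (rule k)
    show "\<And>i j. 1 \<le> i \<Longrightarrow> i \<le> j \<Longrightarrow> j \<le> k \<Longrightarrow> c j \<le> c i" using c_mono by auto
    show "\<And>i. 1 \<le> i \<Longrightarrow> i \<le> k \<Longrightarrow> c i > 0" using c_pos by auto
  qed
  have c1: "c 1 > 0" and ck: "c k > 0" and c1k: "c k \<le> c 1" using c_pos c_mono k by auto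
  have dsb: "ds b > 0" using ds_pos b by auto
  have "ds b / c 1 \<le> ds b / c k" using dsb c1k ck by (intro divide_left_mono) auto
  also have "\<dots> < ds 0 / c k" using W.dsb0 ck by (intro divide_strict_right_mono) auto
  finally have lt: "ds b / c 1 < ds 0 / c k" .
  have "\<exists>h\<in>UNIV. W.S (- h) = b"
    by (rule W.exists_h[where hlo = "- (ds 0 / c k)" and hhi = "- (ds b / c 1)"])
       (use lt in \<open>auto intro: continuous_intros\<close>)
  then obtain h0 where h0: "W.S (- h0) = b" by blast
  have part1: "\<exists>th. cap_solution ds b k c th \<and>
            (\<forall>th'. cap_solution ds b k c th' \<longrightarrow> (\<forall>i\<in>{1..k}. th' i = th i))"
  proof (intro exI conjI allI impI)
    show "cap_solution ds b k c (\<lambda>i. W.F (c i * - h0))" by (rule W.cap_of[OF h0])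
    fix th' assume "cap_solution ds b k c th'"
    then obtain l where l: "W.S l = b" "\<forall>i\<in>{1..k}. th' i = W.F (c i * l)"
      using W.cap_form by blast
    show "\<forall>i\<in>{1..k}. th' i = W.F (c i * - h0)"
      using l W.uniq2[OF l(1) h0] by simp
  qed
  have beta: "wf_beta ds b k c g h = W.S (g h)" for g h
    unfolding wf_beta_def using W.theta_eq by simp
  have part2: "(\<forall>h\<in>I. wf_beta ds b k c g h = b \<longrightarrow>
               (\<forall>th. cap_solution ds b k c th \<longrightarrow> (\<forall>i\<in>{1..k}. th i = wf_theta ds b c g i h))) \<and>
            (\<exists>h\<in>I. wf_beta ds b k c g h = b)"
    if aux: "auxiliary_function ds b k c I g" for I g
  proof (intro conjI ballI impI allI)
    fix h th assume "h \<in> I" "wf_beta ds b k c g h = b" "cap_solution ds b k c th"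
    then have Sh: "W.S (g h) = b" using beta by simp
    obtain l where l: "W.S l = b" "\<forall>i\<in>{1..k}. th i = W.F (c i * l)"
      using W.cap_form \<open>cap_solution ds b k c th\<close> by blast
    fix i assume i: "i \<in> {1..k}"
    show "th i = wf_theta ds b c g i h"
      using l W.uniq2[OF l(1) Sh] i W.theta_eq by simp
  next
    obtain hlo hhi where "is_interval I" "continuous_on I g" "hlo \<in> I" "hhi \<in> I" "hlo < hhi"
      "g hhi \<le> ds b / c 1" "g hlo \<ge> ds 0 / c k"
      using aux unfolding auxiliary_function_def by blast
    then have "\<exists>h\<in>I. W.S (g h) = b" by (intro W.exists_h) auto
    then show "\<exists>h\<in>I. wf_beta ds b k c g h = b" using beta by simp
  qed
  show ?thesis using part1 part2 by blast
qed

end
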